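(* Let $(X,d)$ be a complete CAT(0) space and let $A,B\subseteq X$ be nonempty, closed and convex. Define $P:A\cup B\to A\cup B$ by $P(x)=P_B(x)$ if $x\in A$ and $P(x)=P_A(x)$ if $x\in B$. Then $P$ is a cyclic relatively nonexpansive mapping.
   Context: A CAT(0) space is a geodesic space in which every geodesic triangle satisfies $d(x,y)\le d_{\mathbb{E}^2}(\bar x,\bar y)$ for all points $x,y$ of the triangle and their comparison points $\bar x,\bar y$ in a Euclidean comparison triangle with the same side lengths. For nonempty closed convex $C$ in a complete CAT(0) space, $P_C(x)$ denotes the unique point of $C$ nearest to $x$ (metric projection). A mapping $T:A\cup B\to A\cup B$ is relatively nonexpansive if $d(Tx,Ty)\le d(x,y)$ for all $x\in A$, $y\in B$, and cyclic if $T(A)\subseteq B$ and $T(B)\subseteq A$. *)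

theory Defs
  imports "HOL-Analysis.Analysis"
begin

definition geodesic_from :: "('a::metric_space) \<Rightarrow> 'a \<Rightarrow> (real \<Rightarrow> 'a) \<Rightarrow> bool" where
  "geodesic_from x y g \<longleftrightarrow> g 0 = x \<and> g (dist x y) = y \<and>
     (\<forall>s\<in>{0..dist x y}. \<forall>t\<in>{0..dist x y}. dist (g s) (g t) = \<bar>s - t\<bar>)"

definition geodesic_space :: "'a::metric_space itself \<Rightarrow> bool" where
  "geodesic_space _ \<longleftrightarrow> (\<forall>x y::'a. \<exists>g. geodesic_from x y g)"

text \<open>Point at distance s from a on the Euclidean segment [a,b] of length l (the Euclidean
  plane is modelled by the complex numbers).\<close>
definition cmp_pt :: "complex \<Rightarrow> complex \<Rightarrow> real \<Rightarrow> real \<Rightarrow> complex" where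
  "cmp_pt a b l s = a + complex_of_real (s / l) * (b - a)"

text \<open>Pairs (point of a side, its comparison point) for the geodesic triangle with vertices
  x, y, z, sides g1 (x to y), g2 (y to z), g3 (z to x), and comparison triangle a, b, c.\<close>
definition tri_pairs ::
  "'a::metric_space \<Rightarrow> 'a \<Rightarrow> 'a \<Rightarrow> (real \<Rightarrow> 'a) \<Rightarrow> (real \<Rightarrow> 'a) \<Rightarrow> (real \<Rightarrow> 'a)
   \<Rightarrow> complex \<Rightarrow> complex \<Rightarrow> complex \<Rightarrow> ('a \<times> complex) set" where
  "tri_pairs x y z g1 g2 g3 a b c =
     {(g1 s, cmp_pt a b (dist x y) s) | s. s \<in> {0..dist x y}} \<union>
     {(g2 s, cmp_pt b c (dist y z) s) | s. s \<in> {0..dist y z}} \<union>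
     {(g3 s, cmp_pt c a (dist z x) s) | s. s \<in> {0..dist z x}}"

definition CAT0 :: "'a::metric_space itself \<Rightarrow> bool" where
  "CAT0 T \<longleftrightarrow> geodesic_space T \<and>
     (\<forall>(x::'a) y z g1 g2 g3 a b c.
        geodesic_from x y g1 \<and> geodesic_from y z g2 \<and> geodesic_from z x g3 \<and>
        dist a b = dist x y \<and> dist b c = dist y z \<and> dist c a = dist z x \<longrightarrow>
        (\<forall>(p, p')\<in>tri_pairs x y z g1 g2 g3 a b c. \<forall>(q, q')\<in>tri_pairs x y z g1 g2 g3 a b c.
            dist p q \<le> dist p' q'))"

definition geod_convex :: "'a::metric_space set \<Rightarrow> bool" where
  "geod_convex C \<longleftrightarrow> (\<forall>x\<in>C. \<forall>y\<in>C. \<forall>g. geodesic_from x y g \<longrightarrow> g ` {0..dist x y} \<subseteq> C)"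

definition metric_proj :: "'a::metric_space set \<Rightarrow> 'a \<Rightarrow> 'a" where
  "metric_proj C x = (THE p. p \<in> C \<and> (\<forall>q\<in>C. dist x p \<le> dist x q))"

definition cyclic_map :: "'a set \<Rightarrow> 'a set \<Rightarrow> ('a \<Rightarrow> 'a) \<Rightarrow> bool" where
  "cyclic_map A B T \<longleftrightarrow> T ` A \<subseteq> B \<and> T ` B \<subseteq> A"

definition rel_nonexpansive :: "'a::metric_space set \<Rightarrow> 'a set \<Rightarrow> ('a \<Rightarrow> 'a) \<Rightarrow> bool" where
  "rel_nonexpansive A B T \<longleftrightarrow> (\<forall>x\<in>A. \<forall>y\<in>B. dist (T x) (T y) \<le> dist x y)"

end

theory Submission
  imports Defs
begin
lemma tri_exists:
  fixes \<alpha> \<beta> \<gamma> :: real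
  assumes "0\<le>\<alpha>" "0\<le>\<beta>" "0\<le>\<gamma>" "\<alpha> \<le> \<beta>+\<gamma>" "\<beta> \<le> \<alpha>+\<gamma>" "\<gamma> \<le> \<alpha>+\<beta>"
  shows "\<exists>a b c::complex. dist a b = \<alpha> \<and> dist b c = \<beta> \<and> dist c a = \<gamma>"
proof (cases "\<beta>=0")
  case True
  then have "\<alpha>=\<gamma>" using assms by linarith
  then show ?thesis using True assms
    by (rule_tac x="of_real \<alpha>" in exI, rule_tac x=0 in exI, rule_tac x=0 in exI)
       (simp add: dist_norm)
next
  case False
  then have bp: "\<beta> > 0" using assms by simp
  define u where "u = (\<alpha>^2 - \<gamma>^2 + \<beta>^2)/(2*\<beta>)"
  have fac: "(2*\<alpha>*\<beta>)^2 - (\<alpha>^2 - \<gamma>^2 + \<beta>^2)^2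
      = (\<gamma>-\<alpha>+\<beta>)*(\<gamma>+\<alpha>-\<beta>)*(\<alpha>+\<beta>-\<gamma>)*(\<alpha>+\<beta>+\<gamma>)"
    by (simp add: power2_eq_square algebra_simps)
  have "0 \<le> (\<gamma>-\<alpha>+\<beta>)*(\<gamma>+\<alpha>-\<beta>)*(\<alpha>+\<beta>-\<gamma>)*(\<alpha>+\<beta>+\<gamma>)"
    using assms by (intro mult_nonneg_nonneg) auto
  then have h: "(\<alpha>^2 - \<gamma>^2 + \<beta>^2)^2 \<le> (2*\<alpha>*\<beta>)^2" using fac by linarith
  have uu: "u^2 \<le> \<alpha>^2"
  proof -
    have "u^2 = (\<alpha>^2 - \<gamma>^2 + \<beta>^2)^2 / (2*\<beta>)^2" by (simp add: u_def power_divide)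
    also have "\<dots> \<le> (2*\<alpha>*\<beta>)^2 / (2*\<beta>)^2" using h by (simp add: divide_right_mono)
    also have "\<dots> = \<alpha>^2" using bp by (simp add: power_mult_distrib)
    finally show ?thesis .
  qed
  define v where "v = sqrt(\<alpha>^2 - u^2)"
  have v2: "v^2 = \<alpha>^2 - u^2" using uu by (simp add: v_def)
  have bu: "2*\<beta>*u = \<alpha>^2 - \<gamma>^2 + \<beta>^2" using bp by (simp add: u_def)
  have d1: "dist (Complex u v) 0 = \<alpha>"
    using v2 assms by (simp add: dist_norm complex_norm)
  have d2: "dist 0 (Complex \<beta> 0) = \<beta>"
    using assms by (simp add: dist_norm complex_norm)
  have "(\<beta>-u)^2 + v^2 = \<gamma>^2" using v2 bu by (simp add: power2_eq_square algebra_simps)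
  moreover have "Complex \<beta> 0 - Complex u v = Complex (\<beta>-u) (-v)" by (simp add: complex_eq_iff)
  ultimately have d3: "dist (Complex \<beta> 0) (Complex u v) = \<gamma>"
    using assms by (simp add: dist_norm complex_norm)
  show ?thesis using d1 d2 d3 by blast
qed

lemma inner_ident:
  fixes u w :: "'b::real_inner"
  shows "(norm (u - t *\<^sub>R w))^2 = (1-t)*(norm u)^2 + t*(norm (u-w))^2 - t*(1-t)*(norm w)^2"
  unfolding power2_norm_eq_inner by (simp add: inner_diff inner_scaleR inner_commute algebra_simps)

lemma real_lim_lemma:
  fixes a b k :: real
  assumes "k \<ge> 0" "\<forall>t. 0<t \<and> t\<le>1 \<longrightarrow> a \<le> b - (1-t)*k"
  shows "a \<le> b - k"
proof (rule ccontr)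
  assume n: "\<not> a \<le> b - k"
  show False
  proof (cases "k = 0")
    case True then show False using assms(2)[rule_format, of 1] n by simp
  next
    case False
    then have kp: "k > 0" using assms by simp
    define t where "t = min 1 ((a-b+k)/(2*k))"
    have tp: "0 < t" "t \<le> 1" using n kp by (auto simp: t_def)
    have "a \<le> b - (1-t)*k" using assms(2) tp by blast
    moreover have "t*k \<le> (a-b+k)/2" using kp
      by (simp add: t_def min_def field_simps)
    ultimately show False using n by (simp add: algebra_simps)
  qed
qed

lemma CN:
  fixes x y z :: "'a::metric_space"
  assumes cat: "CAT0 TYPE('a)" and g: "geodesic_from y z g" and t: "0\<le>t" "t\<le>1"
  shows "(dist x (g (t * dist y z)))^2 \<le> (1-t)*(dist x y)^2 + t*(dist x z)^2 - t*(1-t)*(dist y z)^2"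
proof (cases "dist y z = 0")
  case True
  then have "y = z" by simp
  moreover have "g 0 = y" using g by (simp add: geodesic_from_def)
  ultimately show ?thesis using True by (simp add: algebra_simps)
next
  case False
  define D where "D = dist y z"
  have Dp: "D > 0" using False by (simp add: D_def)
  have gs: "geodesic_space TYPE('a)" and C: "\<forall>(x::'a) y z g1 g2 g3 a b c.
        geodesic_from x y g1 \<and> geodesic_from y z g2 \<and> geodesic_from z x g3 \<and>
        dist a b = dist x y \<and> dist b c = dist y z \<and> dist c a = dist z x \<longrightarrow>
        (\<forall>(p, p')\<in>tri_pairs x y z g1 g2 g3 a b c. \<forall>(q, q')\<in>tri_pairs x y z g1 g2 g3 a b c.
            dist p q \<le> dist p' q')" using cat unfolding CAT0_def by auto
  obtain g1 where g1: "geodesic_from x y g1" using gs unfolding geodesic_space_def by blast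
  obtain g3 where g3: "geodesic_from z x g3" using gs unfolding geodesic_space_def by blast
  have tr: "dist x y \<le> dist y z + dist z x" "dist y z \<le> dist x y + dist z x"
    "dist z x \<le> dist x y + dist y z"
    by (metis dist_commute dist_triangle)+
  obtain a b c :: complex where abc: "dist a b = dist x y" "dist b c = dist y z" "dist c a = dist z x"
    using tri_exists[of "dist x y" "dist y z" "dist z x"] tr by auto
  define T where "T = tri_pairs x y z g1 g g3 a b c"
  have H: "\<forall>(p, p')\<in>T. \<forall>(q, q')\<in>T. dist p q \<le> dist p' q'"
    using C g1 g g3 abc unfolding T_def by blast
  have m1: "(x, a) \<in> T" unfolding T_def tri_pairs_def
  proof (intro UnI1)
    have "g1 0 = x" using g1 by (simp add: geodesic_from_def)
    then show "(x, a) \<in> {(g1 s, cmp_pt a b (dist x y) s) |s. s \<in> {0..dist x y}}"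
      by (rule_tac CollectI, rule_tac x=0 in exI) (simp add: cmp_pt_def)
  qed
  define s where "s = t * D"
  have s: "s \<in> {0..D}" using t Dp by (auto simp: s_def mult_le_cancel_right1)
  have m2: "(g s, cmp_pt b c D s) \<in> T" unfolding T_def tri_pairs_def using s D_def by blast
  have "dist x (g s) \<le> dist a (cmp_pt b c D s)" using H m1 m2 by fastforce
  moreover have "cmp_pt b c D s = b + t *\<^sub>R (c - b)"
    using Dp by (simp add: cmp_pt_def s_def scaleR_conv_of_real)
  ultimately have le: "dist x (g s) \<le> norm ((a - b) - t *\<^sub>R (c - b))"
    by (simp add: dist_norm algebra_simps)
  have "(dist x (g s))^2 \<le> (norm ((a - b) - t *\<^sub>R (c - b)))^2"
    using le by (simp add: power_mono)
  also have "\<dots> = (1-t)*(norm (a-b))^2 + t*(norm ((a-b)-(c-b)))^2 - t*(1-t)*(norm (c-b))^2"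
    by (rule inner_ident)
  also have "\<dots> = (1-t)*(dist x y)^2 + t*(dist x z)^2 - t*(1-t)*(dist y z)^2"
    using abc by (simp add: dist_norm[symmetric] dist_commute)
  finally show ?thesis by (simp add: s_def D_def)
qed

lemma CN_mid:
  fixes x y z :: "'a::metric_space"
  assumes cat: "CAT0 TYPE('a)" and g: "geodesic_from y z g"
  shows "(dist x (g (dist y z / 2)))^2 \<le> (dist x y)^2/2 + (dist x z)^2/2 - (dist y z)^2/4"
  using CN[OF cat g, of "1/2" x] by simp

lemma geod_obtain:
  assumes "CAT0 TYPE('a::metric_space)"
  obtains g where "geodesic_from (x::'a) y g"
  using assms unfolding CAT0_def geodesic_space_def by blast

lemma mid_in:
  assumes "geod_convex C" "x \<in> C" "y \<in> C" "geodesic_from x y g"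
  shows "g (dist x y / 2) \<in> C"
proof -
  have "dist x y / 2 \<in> {0..dist x y}" by simp
  then show ?thesis using assms unfolding geod_convex_def by blast
qed

lemma proj_exists:
  fixes C :: "'a::complete_space set"
  assumes cat: "CAT0 TYPE('a)" and ne: "C\<noteq>{}" and cl: "closed C" and cv: "geod_convex C"
  shows "\<exists>!p. p \<in> C \<and> (\<forall>q\<in>C. dist x p \<le> dist x q)"
proof -
  define S where "S = (\<lambda>c. dist x c) ` C"
  define \<delta> where "\<delta> = Inf S"
  have Sne: "S \<noteq> {}" using ne by (simp add: S_def)
  have bdd: "bdd_below S" unfolding S_def by (rule bdd_belowI[of _ 0]) auto
  have low: "\<And>c. c \<in> C \<Longrightarrow> \<delta> \<le> dist x c"
    unfolding \<delta>_def S_def by (rule cInf_lower) (use bdd S_def in auto)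
  have d0: "0 \<le> \<delta>" unfolding \<delta>_def by (rule cInf_greatest[OF Sne]) (auto simp: S_def)
  have "\<forall>n. \<exists>c. c \<in> C \<and> dist x c < \<delta> + inverse (real (Suc n))"
  proof
    fix n
    have "Inf S < \<delta> + inverse (real (Suc n))" by (simp add: \<delta>_def)
    then obtain v where "v \<in> S" "v < \<delta> + inverse (real (Suc n))"
      using cInf_less_iff[OF Sne bdd] by blast
    then show "\<exists>c. c \<in> C \<and> dist x c < \<delta> + inverse (real (Suc n))" by (auto simp: S_def)
  qed
  then obtain f where f: "\<And>n. f n \<in> C" "\<And>n. dist x (f n) < \<delta> + inverse (real (Suc n))"
    by metis
  have key: "(dist (f n) (f m))^2 \<le> 2*(dist x (f n))^2 + 2*(dist x (f m))^2 - 4*\<delta>^2" for n m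
  proof -
    obtain g where g: "geodesic_from (f n) (f m) g" using geod_obtain[OF cat] by blast
    have "g (dist (f n) (f m) / 2) \<in> C" using mid_in[OF cv f(1) f(1) g] .
    then have "\<delta> \<le> dist x (g (dist (f n) (f m) / 2))" by (rule low)
    then have "\<delta>^2 \<le> (dist x (g (dist (f n) (f m) / 2)))^2" using d0 by (simp add: power_mono)
    then show ?thesis using CN_mid[OF cat g, of x] by simp
  qed
  have cau: "Cauchy f"
    unfolding Cauchy_def
  proof (intro allI impI)
    fix e :: real assume e: "e > 0"
    have "0 < min 1 (e^2/(8*\<delta>+4))" using e d0 by simp
    then obtain M where M: "inverse (real (Suc M)) < min 1 (e^2/(8*\<delta>+4))"
      using reals_Archimedean by blast
    define \<eta> where "\<eta> = inverse (real (Suc M))"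
    have \<eta>: "0 < \<eta>" "\<eta> < 1" "\<eta> < e^2/(8*\<delta>+4)" using M by (auto simp: \<eta>_def)
    have bnd: "dist x (f n) \<le> \<delta> + \<eta>" if "n \<ge> M" for n
    proof -
      have "inverse (real (Suc n)) \<le> \<eta>" unfolding \<eta>_def using that
        by (simp add: le_imp_inverse_le)
      then show ?thesis using f(2)[of n] by linarith
    qed
    have sq: "(dist x (f n))^2 \<le> (\<delta> + \<eta>)^2" if "n \<ge> M" for n
      using bnd[OF that] by (simp add: power_mono)
    show "\<exists>M. \<forall>m\<ge>M. \<forall>n\<ge>M. dist (f m) (f n) < e"
    proof (intro exI allI impI)
      fix m n assume mn: "m \<ge> M" "n \<ge> M"
      have "(dist (f m) (f n))^2 \<le> 4*(\<delta>+\<eta>)^2 - 4*\<delta>^2"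
        using key[of m n] sq[OF mn(1)] sq[OF mn(2)] by linarith
      also have "\<dots> = (8*\<delta> + 4*\<eta>)*\<eta>" by (simp add: power2_eq_square algebra_simps)
      also have "\<dots> \<le> (8*\<delta>+4)*\<eta>" using \<eta> by (intro mult_right_mono) auto
      also have "\<dots> < e^2" using \<eta> d0 by (simp add: pos_less_divide_eq mult.commute)
      finally have "(dist (f m) (f n))^2 < e^2" .
      then show "dist (f m) (f n) < e" using e by (simp add: power_less_imp_less_base)
    qed
  qed
  then obtain l where l: "f \<longlonglongrightarrow> l" using Cauchy_convergent_iff convergent_def by blast
  have lC: "l \<in> C" using closed_sequentially[OF cl] f(1) l by blast
  have "(\<lambda>n. dist x (f n)) \<longlonglongrightarrow> dist x l" by (intro tendsto_intros l)
  moreover have "(\<lambda>n. \<delta> + inverse (real (Suc n))) \<longlonglongrightarrow> \<delta> + 0"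
    by (intro tendsto_intros LIMSEQ_inverse_real_of_nat)
  ultimately have "dist x l \<le> \<delta> + 0"
    by (rule LIMSEQ_le) (use f(2) less_imp_le in blast)
  then have lmin: "\<forall>q\<in>C. dist x l \<le> dist x q" using low by force
  show ?thesis
  proof (rule ex1I[of _ l])
    show "l \<in> C \<and> (\<forall>q\<in>C. dist x l \<le> dist x q)" using lC lmin by blast
  next
    fix p assume p: "p \<in> C \<and> (\<forall>q\<in>C. dist x p \<le> dist x q)"
    have eq: "dist x p = dist x l" using p lC lmin by force
    obtain g where g: "geodesic_from p l g" using geod_obtain[OF cat] by blast
    have "g (dist p l / 2) \<in> C" using mid_in[OF cv _ lC g] p by blast
    then have "dist x p \<le> dist x (g (dist p l / 2))" using p by blast
    then have A: "(dist x p)^2 \<le> (dist x (g (dist p l / 2)))^2" by (simp add: power_mono)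
    have B: "(dist x (g (dist p l / 2)))^2 \<le> (dist x p)^2/2 + (dist x l)^2/2 - (dist p l)^2/4"
      by (rule CN_mid[OF cat g])
    have eq2: "(dist x p)^2 = (dist x l)^2" using eq by simp
    have "(dist p l)^2 \<le> 0" using A B eq2 by linarith
    then have "dist p l = 0" by (smt (verit) zero_le_dist zero_less_power2 power2_eq_square)
    then show "p = l" by simp
  qed
qed

lemma proj_props:
  fixes C :: "'a::complete_space set"
  assumes cat: "CAT0 TYPE('a)" and ne: "C\<noteq>{}" and cl: "closed C" and cv: "geod_convex C"
  shows "metric_proj C x \<in> C" "\<forall>q\<in>C. dist x (metric_proj C x) \<le> dist x q"
  using theI'[OF proj_exists[OF assms, of x]] unfolding metric_proj_def by auto

lemma proj_self:
  assumes "x \<in> C"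
  shows "metric_proj C x = x"
  unfolding metric_proj_def
proof (rule the_equality)
  show "x \<in> C \<and> (\<forall>q\<in>C. dist x x \<le> dist x q)" using assms by simp
next
  fix p assume "p \<in> C \<and> (\<forall>q\<in>C. dist x p \<le> dist x q)"
  then have "dist x p \<le> 0" using assms by force
  then show "p = x" by simp
qed

lemma proj_pyth:
  fixes C :: "'a::metric_space set"
  assumes cat: "CAT0 TYPE('a)" and cv: "geod_convex C" and p: "p \<in> C"
    and pmin: "\<forall>q\<in>C. dist x p \<le> dist x q" and c: "c \<in> C"
  shows "(dist x p)^2 + (dist p c)^2 \<le> (dist x c)^2"
proof -
  obtain g where g: "geodesic_from p c g" using geod_obtain[OF cat] by blast
  define D where "D = dist p c"
  have "\<forall>t. 0<t \<and> t\<le>1 \<longrightarrow> (dist x p)^2 \<le> (dist x c)^2 - (1-t)*D^2"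
  proof (intro allI impI)
    fix t :: real assume t: "0<t \<and> t\<le>1"
    have "t * D \<in> {0..D}" using t by (auto simp: D_def mult_left_le_one_le)
    then have "g (t*D) \<in> C" using cv p c g unfolding geod_convex_def D_def by blast
    then have "dist x p \<le> dist x (g (t*D))" using pmin by blast
    then have "(dist x p)^2 \<le> (dist x (g (t*D)))^2" by (simp add: power_mono)
    also have "\<dots> \<le> (1-t)*(dist x p)^2 + t*(dist x c)^2 - t*(1-t)*D^2"
      using CN[OF cat g, of t x] t by (simp add: D_def)
    finally have "t*(dist x p)^2 \<le> t*((dist x c)^2 - (1-t)*D^2)"
      by (simp add: algebra_simps)
    then show "(dist x p)^2 \<le> (dist x c)^2 - (1-t)*D^2" using t by simp
  qed
  then have "(dist x p)^2 \<le> (dist x c)^2 - D^2" by (intro real_lim_lemma) auto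
  then show ?thesis by (simp add: D_def)
qed

theorem mainTheorem9:
  fixes A B :: "'a::complete_space set"
  assumes "CAT0 TYPE('a)"
    and "A \<noteq> {}" and "closed A" and "geod_convex A"
    and "B \<noteq> {}" and "closed B" and "geod_convex B"
  defines "P \<equiv> (\<lambda>x. if x \<in> A then metric_proj B x else metric_proj A x)"
  shows "cyclic_map A B P \<and> rel_nonexpansive A B P"
proof -
  note pA = proj_props[OF assms(1-4)]
  note pB = proj_props[OF assms(1,5-7)]
  have cyc: "cyclic_map A B P"
    unfolding cyclic_map_def P_def using pA(1) pB(1) by (auto simp: proj_self)
  have ne: "rel_nonexpansive A B P"
    unfolding rel_nonexpansive_def
  proof (intro ballI)
    fix x y assume x: "x \<in> A" and y: "y \<in> B"
    define p where "p = metric_proj B x"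
    have Px: "P x = p" using x by (simp add: P_def p_def)
    have pyth1: "(dist x p)^2 + (dist p y)^2 \<le> (dist x y)^2"
      using proj_pyth[OF assms(1) assms(7) pB(1) pB(2) y] by (simp add: p_def)
    show "dist (P x) (P y) \<le> dist x y"
    proof (cases "y \<in> A")
      case True
      then have "P y = y" using y proj_self by (simp add: P_def)
      moreover have "(dist p y)^2 \<le> (dist x y)^2"
        using pyth1 zero_le_power2[of "dist x p"] by linarith
      then have "dist p y \<le> dist x y" by (rule power2_le_imp_le) simp
      ultimately show ?thesis using Px by simp
    next
      case False
      define q where "q = metric_proj A y"
      have Py: "P y = q" using False by (simp add: P_def q_def)
      have pyth2: "(dist y q)^2 + (dist q x)^2 \<le> (dist y x)^2"
        using proj_pyth[OF assms(1) assms(4) pA(1) pA(2) x] by (simp add: q_def)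
      obtain g where g: "geodesic_from x y g" using geod_obtain[OF assms(1)] by blast
      define m where "m = g (dist x y / 2)"
      have h0: "0 \<le> dist x y / 2" by simp
      have "(dist p m)^2 \<le> (dist p x)^2/2 + (dist p y)^2/2 - (dist x y)^2/4"
        using CN_mid[OF assms(1) g, of p] by (simp add: m_def)
      also have "\<dots> \<le> (dist x y / 2)^2" using pyth1
        by (simp add: dist_commute power_divide)
      finally have m1: "dist p m \<le> dist x y / 2" using h0 by (rule power2_le_imp_le)
      have "(dist q m)^2 \<le> (dist q x)^2/2 + (dist q y)^2/2 - (dist x y)^2/4"
        using CN_mid[OF assms(1) g, of q] by (simp add: m_def)
      also have "\<dots> \<le> (dist x y / 2)^2" using pyth2
        by (simp add: dist_commute power_divide)
      finally have m2: "dist q m \<le> dist x y / 2" using h0 by (rule power2_le_imp_le)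
      have "dist p q \<le> dist p m + dist q m" by (metis dist_commute dist_triangle)
      then show ?thesis using Px Py m1 m2 by simp
    qed
  qed
  show ?thesis using cyc ne by blast
qed

end
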